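(* Let $\Omega\subset\mathbb R^2$ be a bounded Lipschitz domain and for $t>0$ let $\Omega_t=\{(x,ty):(x,y)\in\Omega\}$. Then for every $t\ge1$ and every $k\ge1$, $$\mu_k(\Omega_t)\le\mu_k(\Omega).$$ (Equivalently, $\mu_k(\Omega)\le\mu_k(\Omega_t)$ for every $t\in(0,1)$.)
   Context: Neumann eigenvalues of $-\Delta$ on a bounded Lipschitz domain are counted with multiplicity as $0=\mu_0<\mu_1\le\mu_2\le\dots$. *)

theory Defs
  imports "HOL-Analysis.Analysis"
begin

type_synonym R2 = "real \<times> real"

definition rot2 :: "real \<Rightarrow> R2 \<Rightarrow> R2" where
  "rot2 th p = (cos th * fst p - sin th * snd p, sin th * fst p + cos th * snd p)"

text \<open>A bounded Lipschitz domain: a bounded connected open set whose boundary is,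
  near each boundary point and in suitably rotated coordinates, the graph of a
  Lipschitz function with the domain lying on one side (below the graph).\<close>
definition lipschitz_domain :: "R2 set \<Rightarrow> bool" where
  "lipschitz_domain \<Omega> \<longleftrightarrow> open \<Omega> \<and> connected \<Omega> \<and> bounded \<Omega> \<and> \<Omega> \<noteq> {} \<and>
     (\<forall>p \<in> frontier \<Omega>. \<exists>th r h L g.
        r > 0 \<and> h > 0 \<and> L-lipschitz_on UNIV (g :: real \<Rightarrow> real) \<and> g 0 = 0 \<and>
        (\<forall>a. \<bar>a\<bar> < r \<longrightarrow> \<bar>g a\<bar> < h / 2) \<and>
        (\<forall>a b. \<bar>a\<bar> < r \<and> \<bar>b\<bar> < h \<longrightarrow>
              (p + rot2 th (a, b) \<in> \<Omega> \<longleftrightarrow> b < g a)))"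

definition partial1 :: "(R2 \<Rightarrow> real) \<Rightarrow> R2 \<Rightarrow> real" where
  "partial1 f p = deriv (\<lambda>s. f (s, snd p)) (fst p)"

definition partial2 :: "(R2 \<Rightarrow> real) \<Rightarrow> R2 \<Rightarrow> real" where
  "partial2 f p = deriv (\<lambda>s. f (fst p, s)) (snd p)"

text \<open>Iterated partial derivative; True = d/dx, False = d/dy.\<close>
fun dop :: "bool list \<Rightarrow> (R2 \<Rightarrow> real) \<Rightarrow> R2 \<Rightarrow> real" where
  "dop [] f = f"
| "dop (b # bs) f = (if b then partial1 else partial2) (dop bs f)"

definition smooth2 :: "(R2 \<Rightarrow> real) \<Rightarrow> bool" where
  "smooth2 f \<longleftrightarrow> (\<forall>bs. continuous_on UNIV (dop bs f) \<and>
      (\<forall>p. (\<lambda>s. dop bs f (s, snd p)) differentiable (at (fst p)) \<and>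
           (\<lambda>s. dop bs f (fst p, s)) differentiable (at (snd p))))"

definition test_fun :: "R2 set \<Rightarrow> (R2 \<Rightarrow> real) \<Rightarrow> bool" where
  "test_fun \<Omega> \<phi> \<longleftrightarrow> smooth2 \<phi> \<and> compact (closure {p. \<phi> p \<noteq> 0}) \<and>
      closure {p. \<phi> p \<noteq> 0} \<subseteq> \<Omega>"

definition L2_on :: "R2 set \<Rightarrow> (R2 \<Rightarrow> real) \<Rightarrow> bool" where
  "L2_on \<Omega> f \<longleftrightarrow> (\<lambda>x. indicator \<Omega> x * f x) \<in> borel_measurable lborel \<and>
      set_integrable lborel \<Omega> (\<lambda>x. (f x)\<^sup>2)"

definition weak_grad :: "R2 set \<Rightarrow> (R2 \<Rightarrow> real) \<Rightarrow> (R2 \<Rightarrow> real) \<Rightarrow> (R2 \<Rightarrow> real) \<Rightarrow> bool" where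
  "weak_grad \<Omega> f g1 g2 \<longleftrightarrow>
     (\<forall>\<phi>. test_fun \<Omega> \<phi> \<longrightarrow>
        (LINT x:\<Omega>|lborel. f x * partial1 \<phi> x) = - (LINT x:\<Omega>|lborel. g1 x * \<phi> x) \<and>
        (LINT x:\<Omega>|lborel. f x * partial2 \<phi> x) = - (LINT x:\<Omega>|lborel. g2 x * \<phi> x))"

definition H1_with_grad :: "R2 set \<Rightarrow> (R2 \<Rightarrow> real) \<Rightarrow> (R2 \<Rightarrow> real) \<Rightarrow> (R2 \<Rightarrow> real) \<Rightarrow> bool" where
  "H1_with_grad \<Omega> f g1 g2 \<longleftrightarrow> L2_on \<Omega> f \<and> L2_on \<Omega> g1 \<and> L2_on \<Omega> g2 \<and> weak_grad \<Omega> f g1 g2"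

text \<open>An admissible family: functions F i = (f_i, g1_i, g2_i), i = 0..k, in H^1(\<Omega>)
  (with their weak gradients) that are linearly independent as elements of L^2(\<Omega>);
  they span a (k+1)-dimensional subspace of H^1(\<Omega>).\<close>
definition admissible_family :: "R2 set \<Rightarrow> nat \<Rightarrow> (nat \<Rightarrow> (R2 \<Rightarrow> real) \<times> (R2 \<Rightarrow> real) \<times> (R2 \<Rightarrow> real)) \<Rightarrow> bool" where
  "admissible_family \<Omega> k F \<longleftrightarrow>
     (\<forall>i\<le>k. H1_with_grad \<Omega> (fst (F i)) (fst (snd (F i))) (snd (snd (F i)))) \<and>
     (\<forall>c :: nat \<Rightarrow> real. (AE x in lborel. x \<in> \<Omega> \<longrightarrow> (\<Sum>i\<le>k. c i * fst (F i) x) = 0)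
          \<longrightarrow> (\<forall>i\<le>k. c i = 0))"

text \<open>Rayleigh quotient of the combination \<Sum> c_i f_i (its weak gradient is \<Sum> c_i grad f_i).\<close>
definition rayleigh :: "R2 set \<Rightarrow> nat \<Rightarrow> (nat \<Rightarrow> (R2 \<Rightarrow> real) \<times> (R2 \<Rightarrow> real) \<times> (R2 \<Rightarrow> real)) \<Rightarrow> (nat \<Rightarrow> real) \<Rightarrow> real" where
  "rayleigh \<Omega> k F c =
     (LINT x:\<Omega>|lborel. (\<Sum>i\<le>k. c i * fst (snd (F i)) x)\<^sup>2 + (\<Sum>i\<le>k. c i * snd (snd (F i)) x)\<^sup>2)
     / (LINT x:\<Omega>|lborel. (\<Sum>i\<le>k. c i * fst (F i) x)\<^sup>2)"

text \<open>mu_k(\<Omega>) = min over (k+1)-dimensional subspaces V of H^1(\<Omega>) of the max of the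
  Rayleigh quotient over V \ {0}; counted with multiplicity, mu_0 = 0.\<close>
definition neumann_eigenvalue :: "R2 set \<Rightarrow> nat \<Rightarrow> real" where
  "neumann_eigenvalue \<Omega> k =
     Inf {Sup {rayleigh \<Omega> k F c | c. \<exists>i\<le>k. c i \<noteq> 0} | F. admissible_family \<Omega> k F}"

definition stretch :: "real \<Rightarrow> R2 set \<Rightarrow> R2 set" where
  "stretch t \<Omega> = (\<lambda>(x, y). (x, t * y)) ` \<Omega>"

end

theory Submission
  imports Defs
begin

definition sm :: "real \<Rightarrow> R2 \<Rightarrow> R2" where "sm c p = (fst p, c * snd p)"

lemma sm_meas[measurable]: "sm c \<in> borel_measurable borel"
proof -
  have "continuous_on UNIV (sm c)" unfolding sm_def[abs_def] by (intro continuous_intros)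
  then show ?thesis by (rule borel_measurable_continuous_onI)
qed

lemma lborel_sm:
  assumes c: "c > 0"
  shows "lborel = density (distr lborel borel (sm c)) (\<lambda>_. ennreal c)"
proof -
  define cc where "cc = (\<lambda>j::R2. if j = (0,1) then c else 1)"
  have "lborel = density (distr lborel borel (\<lambda>x. 0 + (\<Sum>j\<in>Basis. (cc j * (x \<bullet> j)) *\<^sub>R j)))
          (\<lambda>_. (\<Prod>j\<in>Basis. \<bar>cc j\<bar>))"
    by (rule lborel_affine_euclidean) (use c in \<open>auto simp: cc_def Basis_prod_def\<close>)
  also have "(\<lambda>x::R2. 0 + (\<Sum>j\<in>Basis. (cc j * (x \<bullet> j)) *\<^sub>R j)) = sm c"
    by (auto simp: cc_def Basis_prod_def sm_def fun_eq_iff)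
  also have "(\<Prod>j\<in>(Basis::R2 set). \<bar>cc j\<bar>) = c"
    using c by (simp add: cc_def Basis_prod_def)
  finally show ?thesis .
qed

lemma sm_sm: "c \<noteq> 0 \<Longrightarrow> sm c (sm (1/c) p) = p" "c \<noteq> 0 \<Longrightarrow> sm (1/c) (sm c p) = p"
  by (auto simp: sm_def)

lemma sm_meas_iff:
  fixes h :: "R2 \<Rightarrow> real"
  assumes c: "c > 0"
  shows "(\<lambda>p. h (sm c p)) \<in> borel_measurable lborel \<longleftrightarrow> h \<in> borel_measurable lborel"
proof
  assume "(\<lambda>p. h (sm c p)) \<in> borel_measurable lborel"
  then have "(\<lambda>p. h (sm c (sm (1/c) p))) \<in> borel_measurable lborel"
    by (rule measurable_compose[rotated]) (simp add: measurable_lborel1)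
  then show "h \<in> borel_measurable lborel" using c by (simp add: sm_sm)
next
  assume "h \<in> borel_measurable lborel"
  then show "(\<lambda>p. h (sm c p)) \<in> borel_measurable lborel"
    by (rule measurable_compose[rotated]) (simp add: measurable_lborel1)
qed

lemma integral_sm:
  fixes h :: "R2 \<Rightarrow> real"
  assumes c: "c > 0"
  shows "integral\<^sup>L lborel h = c * integral\<^sup>L lborel (\<lambda>p. h (sm c p))"
proof (cases "h \<in> borel_measurable lborel")
  case True
  then have hb: "h \<in> borel_measurable borel" by simp
  have "integral\<^sup>L lborel h = integral\<^sup>L (density (distr lborel borel (sm c)) (\<lambda>_. ennreal c)) h"
    using lborel_sm[OF c] by simp
  also have "\<dots> = integral\<^sup>L (distr lborel borel (sm c)) (\<lambda>x. c * h x)"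
    by (rule integral_real_density) (use c hb in auto)
  also have "\<dots> = integral\<^sup>L lborel (\<lambda>p. c * h (sm c p))"
    by (rule integral_distr) (use hb in auto)
  also have "\<dots> = c * integral\<^sup>L lborel (\<lambda>p. h (sm c p))" by simp
  finally show ?thesis .
next
  case False
  then have "(\<lambda>p. h (sm c p)) \<notin> borel_measurable lborel" using sm_meas_iff[OF c] by blast
  with False have "\<not> integrable lborel h" "\<not> integrable lborel (\<lambda>p. h (sm c p))"
    by (auto dest: borel_measurable_integrable)
  then show ?thesis
    by (simp add: not_integrable_integral_eq)
qed

lemma integrable_sm:
  fixes h :: "R2 \<Rightarrow> real"
  assumes c: "c > 0"
  shows "integrable lborel h \<longleftrightarrow> integrable lborel (\<lambda>p. h (sm c p))"
proof (cases "h \<in> borel_measurable lborel")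
  case True
  then have hb: "h \<in> borel_measurable borel" by simp
  have "integrable lborel h \<longleftrightarrow> integrable (density (distr lborel borel (sm c)) (\<lambda>_. ennreal c)) h"
    using lborel_sm[OF c] by simp
  also have "\<dots> \<longleftrightarrow> integrable (distr lborel borel (sm c)) (\<lambda>x. c * h x)"
    by (rule integrable_real_density) (use c hb in auto)
  also have "\<dots> \<longleftrightarrow> integrable lborel (\<lambda>p. c * h (sm c p))"
    by (rule integrable_distr_eq) (use hb in auto)
  also have "\<dots> \<longleftrightarrow> integrable lborel (\<lambda>p. h (sm c p))" using c by simp
  finally show ?thesis .
next
  case False
  then have "(\<lambda>p. h (sm c p)) \<notin> borel_measurable lborel" using sm_meas_iff[OF c] by blast
  with False show ?thesis
    by (auto dest: borel_measurable_integrable)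
qed

lemma null_sm:
  assumes c: "c > 0" and N: "N \<in> null_sets lborel"
  shows "sm c -` N \<in> null_sets lborel"
proof -
  have Nb: "N \<in> sets borel" using N by auto
  have "emeasure lborel N = emeasure (density (distr lborel borel (sm c)) (\<lambda>_. ennreal c)) N"
    using lborel_sm[OF c] by simp
  also have "\<dots> = c * emeasure (distr lborel borel (sm c)) N"
    using Nb by (simp add: emeasure_density nn_integral_cmult_indicator)
  also have "\<dots> = c * emeasure lborel (sm c -` N)"
    using Nb by (simp add: emeasure_distr)
  finally have "c * emeasure lborel (sm c -` N) = 0" using N by (simp add: null_setsD1)
  then have "emeasure lborel (sm c -` N) = 0" using c by simp
  moreover have "sm c -` N \<in> sets lborel"
    using Nb measurable_sets[OF sm_meas Nb] by simp
  ultimately show ?thesis by auto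
qed

lemma AE_sm:
  assumes c: "c > 0" and ae: "AE x in lborel. P x"
  shows "AE p in lborel. P (sm c p)"
proof -
  obtain N where N0: "{x \<in> space lborel. \<not> P x} \<subseteq> N" "N \<in> null_sets lborel"
    using ae unfolding eventually_ae_filter by blast
  then have N: "{x. \<not> P x} \<subseteq> N" "N \<in> null_sets lborel" by auto
  show ?thesis
    by (rule AE_I[where N="sm c -` N"]) (use N null_sm[OF c N(2)] in auto)
qed

lemma DERIV_differentiable:
  fixes f :: "real \<Rightarrow> real"
  assumes "DERIV f x :> D" shows "f differentiable (at x)"
proof -
  have "deriv f x = D" using assms by (rule DERIV_imp_deriv)
  then show ?thesis using assms DERIV_deriv_iff_real_differentiable by metis
qed

lemma partial_sm:
  fixes g :: "R2 \<Rightarrow> real"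
  assumes d1: "(\<lambda>s. g (s, c * snd p)) differentiable (at (fst p))"
      and d2: "(\<lambda>s. g (fst p, s)) differentiable (at (c * snd p))"
  shows "partial1 (\<lambda>q. k * g (sm c q)) p = k * partial1 g (sm c p)"
    and "partial2 (\<lambda>q. k * g (sm c q)) p = k * c * partial2 g (sm c p)"
    and "(\<lambda>s. k * g (sm c (s, snd p))) differentiable (at (fst p))"
    and "(\<lambda>s. k * g (sm c (fst p, s))) differentiable (at (snd p))"
proof -
  have D1: "DERIV (\<lambda>s. g (s, c * snd p)) (fst p) :> partial1 g (sm c p)"
    using d1 DERIV_deriv_iff_real_differentiable by (simp add: partial1_def sm_def)
  have D1': "DERIV (\<lambda>s. k * g (sm c (s, snd p))) (fst p) :> k * partial1 g (sm c p)"
    using DERIV_cmult[OF D1, of k] by (simp add: sm_def)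
  then show "partial1 (\<lambda>q. k * g (sm c q)) p = k * partial1 g (sm c p)"
    unfolding partial1_def[of "\<lambda>q. k * g (sm c q)"] by (rule DERIV_imp_deriv)
  show "(\<lambda>s. k * g (sm c (s, snd p))) differentiable (at (fst p))"
    using D1' by (rule DERIV_differentiable)
  have D2: "DERIV (\<lambda>s. g (fst p, s)) (c * snd p) :> partial2 g (sm c p)"
    using d2 DERIV_deriv_iff_real_differentiable by (simp add: partial2_def sm_def)
  have Dl: "DERIV (\<lambda>s. c * s) (snd p) :> c"
    using DERIV_cmult[OF DERIV_ident, of c] by simp
  have D2c: "DERIV (\<lambda>s. g (fst p, c * s)) (snd p) :> partial2 g (sm c p) * c"
    using DERIV_chain2[OF D2 Dl] .
  have D2': "DERIV (\<lambda>s. k * g (sm c (fst p, s))) (snd p) :> k * c * partial2 g (sm c p)"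
    using DERIV_cmult[OF D2c, of k] by (simp add: sm_def mult_ac)
  then show "partial2 (\<lambda>q. k * g (sm c q)) p = k * c * partial2 g (sm c p)"
    unfolding partial2_def[of "\<lambda>q. k * g (sm c q)"] by (rule DERIV_imp_deriv)
  show "(\<lambda>s. k * g (sm c (fst p, s))) differentiable (at (snd p))"
    using D2' by (rule DERIV_differentiable)
qed

lemma dop_sm:
  assumes sm2: "smooth2 \<phi>"
  shows "dop bs (\<lambda>q. \<phi> (sm c q)) = (\<lambda>q. c ^ length (filter Not bs) * dop bs \<phi> (sm c q))"
proof (induction bs)
  case Nil
  then show ?case by simp
next
  case (Cons b bs)
  have d1: "(\<lambda>s. dop bs \<phi> (s, c * snd p)) differentiable (at (fst p))" for p
    using sm2 unfolding smooth2_def by (metis fst_conv snd_conv)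
  have d2: "(\<lambda>s. dop bs \<phi> (fst p, s)) differentiable (at (c * snd p))" for p
    using sm2 unfolding smooth2_def by (metis fst_conv snd_conv)
  note P = partial_sm[OF d1 d2]
  define K where "K = c ^ length (filter Not bs)"
  have e: "dop (b#bs) (\<lambda>q. \<phi> (sm c q)) = (if b then partial1 else partial2) (\<lambda>q. K * dop bs \<phi> (sm c q))"
    by (simp only: dop.simps Cons.IH K_def)
  show ?case
  proof (cases b)
    case True
    then show ?thesis unfolding e using P(1) by (simp add: fun_eq_iff K_def)
  next
    case False
    have "partial2 (\<lambda>q. K * dop bs \<phi> (sm c q)) p = c ^ length (filter Not (b#bs)) * partial2 (dop bs \<phi>) (sm c p)" for p
      using P(2)[of K p] False by (simp add: K_def)
    then show ?thesis unfolding e using False by (simp add: fun_eq_iff)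
  qed
qed

lemma linear_sm: "linear (sm c)"
  by (rule linearI) (auto simp: sm_def algebra_simps)

lemma inj_sm: "c \<noteq> 0 \<Longrightarrow> inj (sm c)"
  by (rule injI) (auto simp: sm_def prod_eq_iff)

lemma cont_sm: "continuous_on A (sm c)"
  unfolding sm_def[abs_def] by (intro continuous_intros)

lemma smooth2_sm:
  assumes sm2: "smooth2 \<phi>"
  shows "smooth2 (\<lambda>q. \<phi> (sm c q))"
  unfolding smooth2_def
proof (intro allI conjI)
  fix bs p
  have d1: "(\<lambda>s. dop bs \<phi> (s, c * snd p)) differentiable (at (fst p))"
    using sm2 unfolding smooth2_def by (metis fst_conv snd_conv)
  have d2: "(\<lambda>s. dop bs \<phi> (fst p, s)) differentiable (at (c * snd p))"
    using sm2 unfolding smooth2_def by (metis fst_conv snd_conv)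
  note P = partial_sm[OF d1 d2]
  show "(\<lambda>s. dop bs (\<lambda>q. \<phi> (sm c q)) (s, snd p)) differentiable at (fst p)"
    using P(3)[of "c ^ length (filter Not bs)"] by (simp only: dop_sm[OF sm2])
  show "(\<lambda>s. dop bs (\<lambda>q. \<phi> (sm c q)) (fst p, s)) differentiable at (snd p)"
    using P(4)[of "c ^ length (filter Not bs)"] by (simp only: dop_sm[OF sm2])
next
  fix bs
  have "continuous_on UNIV (dop bs \<phi>)" using sm2 unfolding smooth2_def by blast
  then have "continuous_on UNIV (\<lambda>q. dop bs \<phi> (sm c q))"
    by (rule continuous_on_compose2[OF _ cont_sm]) auto
  then show "continuous_on UNIV (dop bs (\<lambda>q. \<phi> (sm c q)))"
    by (simp add: dop_sm[OF sm2] continuous_on_mult_left)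
qed

lemma sm_image_sm: "c \<noteq> 0 \<Longrightarrow> sm (1/c) ` sm c ` A = A"
  by (force simp: image_image sm_sm)

lemma test_fun_sm:
  assumes c: "c \<noteq> 0" and tf: "test_fun (sm c ` \<Omega>) \<phi>"
  shows "test_fun \<Omega> (\<lambda>q. \<phi> (sm c q))"
proof -
  have eq: "{p. \<phi> (sm c p) \<noteq> 0} = sm (1/c) ` {q. \<phi> q \<noteq> 0}"
    using c by (force simp: sm_sm image_iff)
  have cl: "closure {p. \<phi> (sm c p) \<noteq> 0} = sm (1/c) ` closure {q. \<phi> q \<noteq> 0}"
    unfolding eq using closure_injective_linear_image[OF linear_sm inj_sm, of "1/c"] c by simp
  have "compact (sm (1/c) ` closure {q. \<phi> q \<noteq> 0})"
    using tf unfolding test_fun_def by (intro compact_continuous_image cont_sm) auto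
  moreover have "sm (1/c) ` closure {q. \<phi> q \<noteq> 0} \<subseteq> \<Omega>"
    using tf unfolding test_fun_def using sm_image_sm[OF c, of \<Omega>] by blast
  ultimately show ?thesis
    using tf unfolding test_fun_def cl by (simp add: smooth2_sm)
qed

lemma indicator_sm: "c \<noteq> 0 \<Longrightarrow> indicator (sm c ` \<Omega>) x = (indicator \<Omega> (sm (1/c) x) :: real)"
proof -
  assume c: "c \<noteq> 0"
  have "x \<in> sm c ` \<Omega> \<longleftrightarrow> sm (1/c) x \<in> \<Omega>"
    using c by (metis image_eqI sm_sm(1) sm_sm(2) imageE)
  then show ?thesis by (simp add: indicator_def)
qed

lemma indicator_sm2: "c \<noteq> 0 \<Longrightarrow> indicator (sm c ` \<Omega>) (sm c p) = (indicator \<Omega> p :: real)"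
  by (simp add: indicator_sm sm_sm)

lemma set_lint_sm:
  fixes h :: "R2 \<Rightarrow> real"
  assumes c: "c > 0"
  shows "(LINT x:(sm c ` \<Omega>)|lborel. h x) = c * (LINT p:\<Omega>|lborel. h (sm c p))"
  unfolding set_lebesgue_integral_def
  using integral_sm[OF c, of "\<lambda>x. indicator (sm c ` \<Omega>) x *\<^sub>R h x"] c
  by (simp add: indicator_sm2)

lemma set_integrable_sm:
  fixes h :: "R2 \<Rightarrow> real"
  assumes c: "c > 0"
  shows "set_integrable lborel (sm c ` \<Omega>) h \<longleftrightarrow> set_integrable lborel \<Omega> (\<lambda>p. h (sm c p))"
  unfolding set_integrable_def
  using integrable_sm[OF c, of "\<lambda>x. indicator (sm c ` \<Omega>) x *\<^sub>R h x"] c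
  by (simp add: indicator_sm2)

lemma ind_sq: "indicator A x *\<^sub>R (f x)\<^sup>2 = ((indicator A x :: real) * f x)\<^sup>2"
  by (simp add: indicator_def)

lemma L2_on_alt:
  "L2_on \<Omega> f \<longleftrightarrow> (\<lambda>x. indicator \<Omega> x * f x) \<in> borel_measurable lborel \<and>
     integrable lborel (\<lambda>x. (indicator \<Omega> x * f x)\<^sup>2)"
  unfolding L2_on_def set_integrable_def ind_sq ..

lemma L2_add_aux:
  fixes u v :: "R2 \<Rightarrow> real"
  assumes "u \<in> borel_measurable lborel" "v \<in> borel_measurable lborel"
    "integrable lborel (\<lambda>x. (u x)\<^sup>2)" "integrable lborel (\<lambda>x. (v x)\<^sup>2)"
  shows "integrable lborel (\<lambda>x. (u x + v x)\<^sup>2)"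
proof (rule Bochner_Integration.integrable_bound)
  show "integrable lborel (\<lambda>x. 2 * (u x)\<^sup>2 + 2 * (v x)\<^sup>2)"
    using assms by auto
  show "(\<lambda>x. (u x + v x)\<^sup>2) \<in> borel_measurable lborel" using assms by measurable
  show "AE x in lborel. norm ((u x + v x)\<^sup>2) \<le> norm (2 * (u x)\<^sup>2 + 2 * (v x)\<^sup>2)"
  proof (rule AE_I2)
    fix x
    have "0 \<le> (u x - v x)\<^sup>2" by simp
    moreover have "(u x + v x)\<^sup>2 + (u x - v x)\<^sup>2 = 2 * (u x)\<^sup>2 + 2 * (v x)\<^sup>2"
      by (simp add: power2_eq_square algebra_simps)
    ultimately have "(u x + v x)\<^sup>2 \<le> 2 * (u x)\<^sup>2 + 2 * (v x)\<^sup>2" by linarith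
    then show "norm ((u x + v x)\<^sup>2) \<le> norm (2 * (u x)\<^sup>2 + 2 * (v x)\<^sup>2)"
      by simp
  qed
qed

lemma L2_on_add:
  assumes "L2_on \<Omega> f" "L2_on \<Omega> g"
  shows "L2_on \<Omega> (\<lambda>x. f x + g x)"
proof -
  have e: "\<And>x. indicator \<Omega> x * (f x + g x) = indicator \<Omega> x * f x + indicator \<Omega> x * g x"
    by (simp add: algebra_simps)
  show ?thesis using assms unfolding L2_on_alt
    by (simp only: e) (auto intro: L2_add_aux)
qed

lemma L2_on_cmult:
  assumes "L2_on \<Omega> f"
  shows "L2_on \<Omega> (\<lambda>x. k * f x)"
proof -
  have e: "\<And>x. indicator \<Omega> x * (k * f x) = k * (indicator \<Omega> x * f x)"
    by (simp add: algebra_simps)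
  have e2: "\<And>x. (k * (indicator \<Omega> x * f x))\<^sup>2 = k\<^sup>2 * (indicator \<Omega> x * f x)\<^sup>2"
    by (simp add: power_mult_distrib)
  show ?thesis using assms unfolding L2_on_alt by (simp only: e e2) auto
qed

lemma L2_on_sum:
  fixes k :: nat
  assumes "\<And>i. i \<le> k \<Longrightarrow> L2_on \<Omega> (g i)"
  shows "L2_on \<Omega> (\<lambda>x. \<Sum>i\<le>k. w i * g i x)"
  using assms
proof (induction k)
  case 0
  then show ?case by (simp add: L2_on_cmult)
next
  case (Suc k)
  then show ?case by (simp add: L2_on_add L2_on_cmult)
qed

lemma L2_on_sm:
  assumes c: "c > 0" and f: "L2_on \<Omega> f"
  shows "L2_on (sm c ` \<Omega>) (\<lambda>x. k * f (sm (1/c) x))"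
proof -
  define u where "u = (\<lambda>x. indicator \<Omega> x * f x)"
  have u: "u \<in> borel_measurable lborel" "integrable lborel (\<lambda>x. (u x)\<^sup>2)"
    using f unfolding L2_on_alt u_def by auto
  have c': "1/c > 0" using c by simp
  have e: "\<And>x. indicator (sm c ` \<Omega>) x * (k * f (sm (1/c) x)) = k * u (sm (1/c) x)"
    using c by (simp add: indicator_sm u_def)
  have m: "(\<lambda>x. u (sm (1/c) x)) \<in> borel_measurable lborel"
    using sm_meas_iff[OF c', of u] u by simp
  have i: "integrable lborel (\<lambda>x. (u (sm (1/c) x))\<^sup>2)"
    using integrable_sm[OF c', of "\<lambda>x. (u x)\<^sup>2"] u by simp
  have e2: "\<And>x. (k * u (sm (1/c) x))\<^sup>2 = k\<^sup>2 * (u (sm (1/c) x))\<^sup>2"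
    by (simp add: power_mult_distrib)
  show ?thesis unfolding L2_on_alt by (simp only: e e2) (use m i in auto)
qed

lemma weak_grad_sm:
  assumes c: "c > 0" and wg: "weak_grad \<Omega> f g1 g2"
  shows "weak_grad (sm c ` \<Omega>) (\<lambda>x. f (sm (1/c) x)) (\<lambda>x. g1 (sm (1/c) x)) (\<lambda>x. g2 (sm (1/c) x) / c)"
  unfolding weak_grad_def
proof (intro allI impI conjI)
  fix \<phi> assume tf: "test_fun (sm c ` \<Omega>) \<phi>"
  define \<psi> where "\<psi> = (\<lambda>q. \<phi> (sm c q))"
  have c0: "c \<noteq> 0" using c by simp
  have tf2: "test_fun \<Omega> \<psi>" unfolding \<psi>_def by (rule test_fun_sm[OF c0 tf])
  have s2: "smooth2 \<phi>" using tf unfolding test_fun_def by simp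
  have p1: "partial1 \<psi> q = partial1 \<phi> (sm c q)" for q
    using fun_cong[OF dop_sm[OF s2, of "[True]" c], of q] unfolding \<psi>_def by simp
  have p2: "partial2 \<psi> q = c * partial2 \<phi> (sm c q)" for q
    using fun_cong[OF dop_sm[OF s2, of "[False]" c], of q] unfolding \<psi>_def by simp
  have W1: "(LINT x:\<Omega>|lborel. f x * partial1 \<psi> x) = - (LINT x:\<Omega>|lborel. g1 x * \<psi> x)"
    and W2: "(LINT x:\<Omega>|lborel. f x * partial2 \<psi> x) = - (LINT x:\<Omega>|lborel. g2 x * \<psi> x)"
    using wg tf2 unfolding weak_grad_def by auto
  show "(LINT x:sm c ` \<Omega>|lborel. f (sm (1 / c) x) * partial1 \<phi> x) =
        - (LINT x:sm c ` \<Omega>|lborel. g1 (sm (1 / c) x) * \<phi> x)"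
    using W1[unfolded p1] c0 by (simp add: set_lint_sm[OF c] sm_sm \<psi>_def)
  have e1: "f (sm (1/c) (sm c p)) * partial2 \<phi> (sm c p) = (1/c) * (f p * partial2 \<psi> p)" for p
    using c0 by (simp add: sm_sm p2)
  have e2: "g2 (sm (1/c) (sm c p)) / c * \<phi> (sm c p) = (1/c) * (g2 p * \<psi> p)" for p
    using c0 by (simp add: sm_sm \<psi>_def)
  show "(LINT x:sm c ` \<Omega>|lborel. f (sm (1 / c) x) * partial2 \<phi> x) =
        - (LINT x:sm c ` \<Omega>|lborel. g2 (sm (1 / c) x) / c * \<phi> x)"
    unfolding set_lint_sm[OF c] e1 e2 set_integral_mult_right W2 by simp
qed

definition tr :: "real \<Rightarrow> (nat \<Rightarrow> (R2 \<Rightarrow> real) \<times> (R2 \<Rightarrow> real) \<times> (R2 \<Rightarrow> real)) \<Rightarrow> (nat \<Rightarrow> (R2 \<Rightarrow> real) \<times> (R2 \<Rightarrow> real) \<times> (R2 \<Rightarrow> real))" where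
  "tr c F = (\<lambda>i. ((\<lambda>x. fst (F i) (sm (1/c) x)), (\<lambda>x. fst (snd (F i)) (sm (1/c) x)),
                    (\<lambda>x. snd (snd (F i)) (sm (1/c) x) / c)))"

lemma admissible_sm:
  assumes c: "c > 0" and adm: "admissible_family \<Omega> k F"
  shows "admissible_family (sm c ` \<Omega>) k (tr c F)"
  unfolding admissible_family_def
proof (intro conjI allI impI)
  fix i assume i: "i \<le> k"
  have H: "H1_with_grad \<Omega> (fst (F i)) (fst (snd (F i))) (snd (snd (F i)))"
    using adm i unfolding admissible_family_def by blast
  have "L2_on (sm c ` \<Omega>) (\<lambda>x. 1 * fst (F i) (sm (1/c) x))"
    by (rule L2_on_sm[OF c]) (use H in \<open>simp add: H1_with_grad_def\<close>)
  moreover have "L2_on (sm c ` \<Omega>) (\<lambda>x. 1 * fst (snd (F i)) (sm (1/c) x))"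
    by (rule L2_on_sm[OF c]) (use H in \<open>simp add: H1_with_grad_def\<close>)
  moreover have "L2_on (sm c ` \<Omega>) (\<lambda>x. (1/c) * snd (snd (F i)) (sm (1/c) x))"
    by (rule L2_on_sm[OF c]) (use H in \<open>simp add: H1_with_grad_def\<close>)
  moreover have "weak_grad (sm c ` \<Omega>) (\<lambda>x. fst (F i) (sm (1/c) x)) (\<lambda>x. fst (snd (F i)) (sm (1/c) x))
      (\<lambda>x. snd (snd (F i)) (sm (1/c) x) / c)"
    using H unfolding H1_with_grad_def by (auto intro: weak_grad_sm[OF c])
  ultimately show "H1_with_grad (sm c ` \<Omega>) (fst (tr c F i)) (fst (snd (tr c F i))) (snd (snd (tr c F i)))"
    unfolding H1_with_grad_def tr_def by simp
next
  fix w :: "nat \<Rightarrow> real" and i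
  assume ae: "AE x in lborel. x \<in> sm c ` \<Omega> \<longrightarrow> (\<Sum>i\<le>k. w i * fst (tr c F i) x) = 0"
    and i: "i \<le> k"
  have c0: "c \<noteq> 0" using c by simp
  have "AE p in lborel. sm c p \<in> sm c ` \<Omega> \<longrightarrow> (\<Sum>i\<le>k. w i * fst (tr c F i) (sm c p)) = 0"
    by (rule AE_sm[OF c ae])
  then have "AE p in lborel. p \<in> \<Omega> \<longrightarrow> (\<Sum>i\<le>k. w i * fst (F i) p) = 0"
    by (rule AE_mp) (use c0 in \<open>auto simp: tr_def sm_sm\<close>)
  then show "w i = 0" using adm i unfolding admissible_family_def by blast
qed

lemma L2_sq_int:
  fixes k :: nat
  assumes "\<And>i. i \<le> k \<Longrightarrow> L2_on \<Omega> (g i)"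
  shows "set_integrable lborel \<Omega> (\<lambda>x. (\<Sum>i\<le>k. w i * g i x)\<^sup>2)"
proof -
  have "L2_on \<Omega> (\<lambda>x. \<Sum>i\<le>k. w i * g i x)" by (rule L2_on_sum) (rule assms)
  then show ?thesis unfolding L2_on_def by blast
qed

lemma rayleigh_formulas:
  fixes w :: "nat \<Rightarrow> real"
  assumes c: "c > 0" and adm: "admissible_family \<Omega> k F"
  defines "I0 \<equiv> (LINT x:\<Omega>|lborel. (\<Sum>i\<le>k. w i * fst (F i) x)\<^sup>2)"
      and "I1 \<equiv> (LINT x:\<Omega>|lborel. (\<Sum>i\<le>k. w i * fst (snd (F i)) x)\<^sup>2)"
      and "I2 \<equiv> (LINT x:\<Omega>|lborel. (\<Sum>i\<le>k. w i * snd (snd (F i)) x)\<^sup>2)"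
  shows "rayleigh \<Omega> k F w = (I1 + I2) / I0"
    and "rayleigh (sm c ` \<Omega>) k (tr c F) w = (I1 + I2 / c\<^sup>2) / I0"
    and "I0 \<ge> 0" "I1 \<ge> 0" "I2 \<ge> 0"
proof -
  have c0: "c \<noteq> 0" using c by simp
  have H: "\<And>i. i \<le> k \<Longrightarrow> H1_with_grad \<Omega> (fst (F i)) (fst (snd (F i))) (snd (snd (F i)))"
    using adm unfolding admissible_family_def by blast
  have int1: "set_integrable lborel \<Omega> (\<lambda>x. (\<Sum>i\<le>k. w i * fst (snd (F i)) x)\<^sup>2)"
    by (rule L2_sq_int) (use H in \<open>auto simp: H1_with_grad_def\<close>)
  have int2: "set_integrable lborel \<Omega> (\<lambda>x. (\<Sum>i\<le>k. w i * snd (snd (F i)) x)\<^sup>2)"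
    by (rule L2_sq_int) (use H in \<open>auto simp: H1_with_grad_def\<close>)
  show "rayleigh \<Omega> k F w = (I1 + I2) / I0"
    unfolding rayleigh_def I0_def I1_def I2_def using int1 int2 by simp
  have e: "(\<Sum>i\<le>k. w i * (snd (snd (F i)) p / c))\<^sup>2 = (\<Sum>i\<le>k. w i * snd (snd (F i)) p)\<^sup>2 / c\<^sup>2" for p
    by (simp add: sum_divide_distrib[symmetric] power_divide)
  have "rayleigh (sm c ` \<Omega>) k (tr c F) w =
     (c * (LINT p:\<Omega>|lborel. (\<Sum>i\<le>k. w i * fst (snd (F i)) p)\<^sup>2 + (\<Sum>i\<le>k. w i * (snd (snd (F i)) p / c))\<^sup>2))
     / (c * I0)"
    unfolding rayleigh_def tr_def I0_def set_lint_sm[OF c] using c0 by (simp add: sm_sm)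
  also have "\<dots> = (I1 + I2 / c\<^sup>2) / I0"
    unfolding e using int1 int2 c0 by (simp add: I1_def I2_def)
  finally show "rayleigh (sm c ` \<Omega>) k (tr c F) w = (I1 + I2 / c\<^sup>2) / I0" .
  show "I0 \<ge> 0" "I1 \<ge> 0" "I2 \<ge> 0"
    unfolding I0_def I1_def I2_def set_lebesgue_integral_def
    by (auto intro!: integral_nonneg_AE simp: indicator_def)
qed

lemma stretch_eq: "stretch t \<Omega> = sm t ` \<Omega>"
proof -
  have "(\<lambda>(x, y). (x, t * y)) = sm t" by (auto simp: fun_eq_iff sm_def)
  then show ?thesis unfolding stretch_def by simp
qed

lemma sup_unb:
  fixes X Y :: "real set"
  assumes "\<not> bdd_above X" "\<not> bdd_above Y"
  shows "Sup X = Sup Y"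
proof -
  have "(\<lambda>z. \<forall>x\<in>X. x \<le> z) = (\<lambda>z. \<forall>x\<in>Y. x \<le> z)"
    using assms unfolding bdd_above_def by (auto simp: fun_eq_iff)
  then show ?thesis unfolding Sup_real_def by simp
qed

lemma rayleigh_nonneg: "rayleigh \<Omega> k F w \<ge> 0"
  unfolding rayleigh_def set_lebesgue_integral_def
  by (intro divide_nonneg_nonneg integral_nonneg_AE) (auto simp: indicator_def)

lemma sup_le:
  fixes t :: real
  assumes t: "t \<ge> 1" and adm: "admissible_family \<Omega> k F"
  shows "Sup {rayleigh (sm t ` \<Omega>) k (tr t F) c | c. \<exists>i\<le>k. c i \<noteq> 0}
       \<le> Sup {rayleigh \<Omega> k F c | c. \<exists>i\<le>k. c i \<noteq> 0}"
    (is "Sup ?A \<le> Sup ?B")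
proof -
  have t0: "t > 0" using t by simp
  have le1: "rayleigh (sm t ` \<Omega>) k (tr t F) w \<le> rayleigh \<Omega> k F w" for w
  proof -
    note R = rayleigh_formulas[OF t0 adm, of w]
    have "t\<^sup>2 \<ge> 1" using t by (simp add: one_le_power)
    have "I2 / t\<^sup>2 \<le> I2" if "I2 \<ge> 0" for I2 :: real
    proof -
      have "I2 * 1 \<le> I2 * t\<^sup>2" using mult_left_mono[OF \<open>t\<^sup>2 \<ge> 1\<close> that] .
      then show ?thesis using t0 by (simp add: divide_le_eq)
    qed
    then show ?thesis unfolding R(1,2) using R(3-5) by (intro divide_right_mono) auto
  qed
  have le2: "rayleigh \<Omega> k F w \<le> t\<^sup>2 * rayleigh (sm t ` \<Omega>) k (tr t F) w" for w
  proof -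
    note R = rayleigh_formulas[OF t0 adm, of w]
    have "t\<^sup>2 \<ge> 1" using t by (simp add: one_le_power)
    have "I1 + I2 \<le> t\<^sup>2 * (I1 + I2 / t\<^sup>2)" if "I1 \<ge> 0" for I1 I2 :: real
    proof -
      have "t\<^sup>2 * (I1 + I2 / t\<^sup>2) = t\<^sup>2 * I1 + I2" using t0 by (simp add: field_simps)
      moreover have "I1 \<le> t\<^sup>2 * I1" using mult_right_mono[OF \<open>t\<^sup>2 \<ge> 1\<close> that] by simp
      ultimately show ?thesis by simp
    qed
    then have "(I1' + I2') / I0' \<le> t\<^sup>2 * (I1' + I2' / t\<^sup>2) / I0'" if "I1' \<ge> 0" "I0' \<ge> 0" for I0' I1' I2' :: real
      using that by (intro divide_right_mono) auto
    then show ?thesis unfolding R(1,2) using R(3-5) by simp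
  qed
  define w0 :: "nat \<Rightarrow> real" where "w0 = (\<lambda>i. if i = 0 then 1 else 0)"
  have w0: "\<exists>i\<le>k. w0 i \<noteq> 0" unfolding w0_def by auto
  show ?thesis
  proof (cases "bdd_above ?B")
    case True
    show ?thesis
    proof (rule cSup_mono)
      show "?A \<noteq> {}" using w0 by blast
      show "bdd_above ?B" by (rule True)
      fix b assume "b \<in> ?A"
      then obtain w where "b = rayleigh (sm t ` \<Omega>) k (tr t F) w" "\<exists>i\<le>k. w i \<noteq> 0" by blast
      then show "\<exists>a\<in>?B. b \<le> a" using le1[of w] by blast
    qed
  next
    case False
    have "\<not> bdd_above ?A"
    proof
      assume "bdd_above ?A"
      then obtain M where M: "\<And>x. x \<in> ?A \<Longrightarrow> x \<le> M" unfolding bdd_above_def by blast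
      have "bdd_above ?B"
        unfolding bdd_above_def
      proof (intro exI ballI)
        fix x assume "x \<in> ?B"
        then obtain w where w: "x = rayleigh \<Omega> k F w" "\<exists>i\<le>k. w i \<noteq> 0" by blast
        have "rayleigh (sm t ` \<Omega>) k (tr t F) w \<le> M" using M w(2) by blast
        then have "t\<^sup>2 * rayleigh (sm t ` \<Omega>) k (tr t F) w \<le> t\<^sup>2 * M"
          by (simp add: mult_left_mono)
        then show "x \<le> t\<^sup>2 * M" using le2[of w] w(1) by simp
      qed
      with False show False by simp
    qed
    then show ?thesis using sup_unb[OF _ False] by simp
  qed
qed

theorem lemma3p1:
  fixes \<Omega> :: "R2 set" and t :: real and k :: nat
  assumes "lipschitz_domain \<Omega>" and "t \<ge> 1" and "k \<ge> 1"
  shows "neumann_eigenvalue (stretch t \<Omega>) k \<le> neumann_eigenvalue \<Omega> k"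
proof -
  have t0: "t > 0" using assms(2) by simp
  define \<Omega>t where "\<Omega>t = sm t ` \<Omega>"
  define RS where "RS = (\<lambda>U G. Sup {rayleigh U k G c | c. \<exists>i\<le>k. c i \<noteq> 0})"
  define At where "At = {RS \<Omega>t G | G. admissible_family \<Omega>t k G}"
  define A where "A = {RS \<Omega> F | F. admissible_family \<Omega> k F}"
  have goal: "neumann_eigenvalue (stretch t \<Omega>) k = Inf At" "neumann_eigenvalue \<Omega> k = Inf A"
    unfolding neumann_eigenvalue_def At_def A_def RS_def \<Omega>t_def stretch_eq by simp_all
  define u :: real where "u = Sup UNIV"
  define w0 :: "nat \<Rightarrow> real" where "w0 = (\<lambda>i. if i = 0 then 1 else 0)"
  have w0: "\<exists>i\<le>k. w0 i \<noteq> 0" unfolding w0_def by auto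
  have lower: "min 0 u \<le> RS U G" for U G
  proof (cases "bdd_above {rayleigh U k G c | c. \<exists>i\<le>k. c i \<noteq> 0}")
    case True
    have "rayleigh U k G w0 \<le> RS U G"
      unfolding RS_def by (rule cSup_upper) (use w0 True in blast)+
    then show ?thesis using rayleigh_nonneg[of U k G w0] by simp
  next
    case False
    have "\<not> bdd_above (UNIV :: real set)"
      unfolding bdd_above_def by (metis UNIV_I gt_ex not_le)
    then have "RS U G = u" unfolding RS_def u_def by (rule sup_unb[OF False])
    then show ?thesis by simp
  qed
  have bb: "bdd_below At" unfolding bdd_below_def using lower At_def by blast
  show ?thesis
  proof (cases "A = {}")
    case True
    have "At = {}"
    proof (rule ccontr)
      assume "At \<noteq> {}"
      then obtain G where G: "admissible_family \<Omega>t k G" unfolding At_def by blast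
      have "admissible_family (sm (1/t) ` \<Omega>t) k (tr (1/t) G)"
        by (rule admissible_sm) (use t0 G in auto)
      moreover have "sm (1/t) ` \<Omega>t = \<Omega>" unfolding \<Omega>t_def using sm_image_sm[of t \<Omega>] t0 by simp
      ultimately show False using True unfolding A_def by blast
    qed
    then show ?thesis unfolding goal using True by simp
  next
    case False
    show ?thesis unfolding goal
    proof (rule cInf_greatest[OF False])
      fix a assume "a \<in> A"
      then obtain F where F: "admissible_family \<Omega> k F" "a = RS \<Omega> F" unfolding A_def by blast
      have "admissible_family \<Omega>t k (tr t F)" unfolding \<Omega>t_def by (rule admissible_sm[OF t0 F(1)])
      then have "RS \<Omega>t (tr t F) \<in> At" unfolding At_def by blast
      then have "Inf At \<le> RS \<Omega>t (tr t F)" by (rule cInf_lower[OF _ bb])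
      also have "\<dots> \<le> a" unfolding F(2) RS_def \<Omega>t_def by (rule sup_le[OF assms(2) F(1)])
      finally show "Inf At \<le> a" .
    qed
  qed
qed

end
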